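(* Let $n\ge 3$ be an integer and let $\{D_I\}_{I\in\binom{[n]}{n-1}}$ be a family of positive real numbers, where $[n]=\{1,\dots,n\}$; write $D_{\hat i}=D_{[n]\setminus\{i\}}$ for $i\in[n]$. There exists a positive-weighted (simple, finite) graph $\mathcal G=(G,w)$ with vertex set exactly $V(G)=[n]$ such that $D_{\hat i}(\mathcal G)=D_{\hat i}$ for all $i\in[n]$ if and only if the following two conditions hold: (i) $(n-2)D_{\hat i}\le \sum_{j\in[n]\setminus\{i\}} D_{\hat j}$ for every $i\in[n]$; (ii) if the maximum of $\{D_{\hat i}\}_{i\in[n]}$ is attained by at least two indices $i$, then all the inequalities in (i) are strict.
   Context: All graphs are simple and finite. A positive-weighted graph $\mathcal G=(G,w)$ is a graph $G$ with a function $w:E(G)\to\mathbb R_{>0}$; for a subgraph $G'$, $w(G')$ is the sum of the weights of the edges of $G'$. For distinct vertices $i_1,\dots,i_k$ of $G$, $D_{\{i_1,\dots,i_k\}}(\mathcal G)$ is the minimum of $w(R)$ over all connected subgraphs $R$ of $G$ whose vertex set contains $i_1,\dots,i_k$ (equality $D_{\hat i}(\mathcal G)=D_{\hat i}$ in particular requires such subgraphs to exist). We write $D_{\hat i}(\mathcal G)=D_{[n]\setminus\{i\}}(\mathcal G)$. *)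

theory Defs
  imports Complex_Main
begin

definition simple_graph :: "'a set \<Rightarrow> 'a set set \<Rightarrow> bool" where
  "simple_graph V E \<longleftrightarrow> finite V \<and> (\<forall>e\<in>E. e \<subseteq> V \<and> card e = 2)"

definition pos_weighted_graph :: "'a set \<Rightarrow> 'a set set \<Rightarrow> ('a set \<Rightarrow> real) \<Rightarrow> bool" where
  "pos_weighted_graph V E w \<longleftrightarrow> simple_graph V E \<and> (\<forall>e\<in>E. w e > 0)"

definition subgraph :: "'a set \<Rightarrow> 'a set set \<Rightarrow> 'a set \<Rightarrow> 'a set set \<Rightarrow> bool" where
  "subgraph S F V E \<longleftrightarrow> S \<subseteq> V \<and> F \<subseteq> E \<and> (\<forall>e\<in>F. e \<subseteq> S)"

definition connected_graph :: "'a set \<Rightarrow> 'a set set \<Rightarrow> bool" where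
  "connected_graph S F \<longleftrightarrow> S \<noteq> {} \<and>
     (\<forall>u\<in>S. \<forall>v\<in>S. (u, v) \<in> {(a, b). {a, b} \<in> F}\<^sup>*)"

(* D_X(G) = d : the minimum of w(R) over connected subgraphs R of G whose vertex
   set contains X exists and equals d *)
definition min_conn_weight :: "'a set \<Rightarrow> 'a set set \<Rightarrow> ('a set \<Rightarrow> real) \<Rightarrow> 'a set \<Rightarrow> real \<Rightarrow> bool" where
  "min_conn_weight V E w X d \<longleftrightarrow>
     (\<exists>S F. subgraph S F V E \<and> connected_graph S F \<and> X \<subseteq> S \<and> sum w F = d) \<and>
     (\<forall>S F. subgraph S F V E \<and> connected_graph S F \<and> X \<subseteq> S \<longrightarrow> d \<le> sum w F)"

end

theory Submission
  imports Defs
begin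


definition rel :: "'a set set \<Rightarrow> ('a \<times> 'a) set" where
  "rel F = {(a, b). {a, b} \<in> F}"

lemma conn_rel: "connected_graph S F \<longleftrightarrow> S \<noteq> {} \<and> (\<forall>u\<in>S. \<forall>v\<in>S. (u,v) \<in> (rel F)\<^sup>*)"
  by (simp add: connected_graph_def rel_def)

lemma rel_mono: "F \<subseteq> G \<Longrightarrow> rel F \<subseteq> rel G"
  by (auto simp: rel_def)

lemma rel_sym: "(rel F)\<inverse> = rel F"
  by (auto simp: rel_def insert_commute)

lemma rtr_sym: "(u,v) \<in> (rel F)\<^sup>* \<Longrightarrow> (v,u) \<in> (rel F)\<^sup>*"
proof -
  assume "(u,v) \<in> (rel F)\<^sup>*"
  then have "(v,u) \<in> ((rel F)\<inverse>)\<^sup>*" by (rule rtrancl_converseI)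
  then show ?thesis by (simp only: rel_sym)
qed

lemma conn_union:
  assumes "connected_graph S1 F1" "connected_graph S2 F2" "z \<in> S1" "z \<in> S2"
  shows "connected_graph (S1 \<union> S2) (F1 \<union> F2)"
proof -
  have m1: "(rel F1)\<^sup>* \<subseteq> (rel (F1 \<union> F2))\<^sup>*" and m2: "(rel F2)\<^sup>* \<subseteq> (rel (F1 \<union> F2))\<^sup>*"
    by (rule rtrancl_mono, rule rel_mono, blast)+
  have h: "(u,z) \<in> (rel (F1\<union>F2))\<^sup>*" if "u \<in> S1 \<union> S2" for u
  proof (cases "u \<in> S1")
    case True
    then have "(u,z) \<in> (rel F1)\<^sup>*" using assms(1,3) unfolding conn_rel by blast
    then show ?thesis using m1 by blast
  next
    case False
    then have "u \<in> S2" using that by blast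
    then have "(u,z) \<in> (rel F2)\<^sup>*" using assms(2,4) unfolding conn_rel by blast
    then show ?thesis using m2 by blast
  qed
  show ?thesis unfolding conn_rel
  proof (intro conjI ballI)
    show "S1 \<union> S2 \<noteq> {}" using assms(3) by blast
    fix u v assume "u \<in> S1 \<union> S2" "v \<in> S1 \<union> S2"
    then have "(u,z) \<in> (rel (F1\<union>F2))\<^sup>*" "(z,v) \<in> (rel (F1\<union>F2))\<^sup>*" using h rtr_sym by metis+
    then show "(u,v) \<in> (rel (F1\<union>F2))\<^sup>*" by (rule rtrancl_trans)
  qed
qed

lemma conn_star: "c \<in> S \<Longrightarrow> connected_graph S ((\<lambda>j. {c,j}) ` (S - {c}))"
proof -
  assume c: "c \<in> S"
  let ?F = "(\<lambda>j. {c,j}) ` (S - {c})"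
  have h: "(c,u) \<in> (rel ?F)\<^sup>*" if "u \<in> S" for u
  proof (cases "u = c")
    case False
    then have "(c,u) \<in> rel ?F" using that by (auto simp: rel_def)
    then show ?thesis by blast
  qed simp
  show ?thesis unfolding conn_rel
  proof (intro conjI ballI)
    show "S \<noteq> {}" using c by blast
    fix u v assume "u \<in> S" "v \<in> S"
    then have "(u,c) \<in> (rel ?F)\<^sup>*" "(c,v) \<in> (rel ?F)\<^sup>*" using h rtr_sym by metis+
    then show "(u,v) \<in> (rel ?F)\<^sup>*" by (rule rtrancl_trans)
  qed
qed

lemma cross: "(x,y) \<in> r\<^sup>* \<Longrightarrow> x \<in> R \<Longrightarrow> y \<notin> R \<Longrightarrow> \<exists>a b. (a,b) \<in> r \<and> a \<in> R \<and> b \<notin> R"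
proof (induction rule: rtrancl_induct)
  case base
  then show ?case by blast
next
  case (step y z)
  show ?case
  proof (cases "y \<in> R")
    case True
    then show ?thesis using step by blast
  next
    case False
    then show ?thesis using step by blast
  qed
qed

lemma tree_inj:
  assumes conn: "connected_graph S F" and fin: "finite S" and sub: "\<forall>e\<in>F. e \<subseteq> S" and r: "r \<in> S"
  shows "\<exists>p. inj_on p (S - {r}) \<and> (\<forall>k\<in>S-{r}. p k \<in> F \<and> k \<in> p k)"
proof -
  have main: "\<exists>R p. r \<in> R \<and> R \<subseteq> S \<and> card R = Suc m \<and> inj_on p (R - {r}) \<and>
     (\<forall>k\<in>R-{r}. p k \<in> F \<and> k \<in> p k \<and> p k \<subseteq> R)" if "m < card S" for m
    using that
  proof (induction m)
    case 0
    show ?case by (rule exI[of _ "{r}"], rule exI[of _ "\<lambda>_. {}"]) (use r in auto)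
  next
    case (Suc m)
    then obtain R p where R: "r \<in> R" "R \<subseteq> S" "card R = Suc m" "inj_on p (R - {r})"
      "\<forall>k\<in>R-{r}. p k \<in> F \<and> k \<in> p k \<and> p k \<subseteq> R" by auto
    have "R \<noteq> S" using R(3) Suc.prems by auto
    then obtain v where v: "v \<in> S" "v \<notin> R" using R(2) by blast
    have "(r,v) \<in> (rel F)\<^sup>*" using conn r v unfolding conn_rel by blast
    then obtain a b where ab: "(a,b) \<in> rel F" "a \<in> R" "b \<notin> R" using cross R(1) v(2) by metis
    have abF: "{a,b} \<in> F" using ab(1) by (simp add: rel_def)
    then have bS: "b \<in> S" using sub by blast
    have finR: "finite R" using R(2) fin finite_subset by blast
    let ?R = "insert b R" and ?p = "p(b := {a,b})"
    have c1: "card ?R = Suc (Suc m)" using finR ab(3) R(3) by simp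
    have c2: "?R - {r} = insert b (R - {r})" using R(1) ab(3) by auto
    have c3: "inj_on ?p (insert b (R - {r}))"
    proof -
      have "inj_on ?p (R - {r})" using R(4) ab(3) unfolding inj_on_def by auto
      moreover have "?p b \<notin> ?p ` (R - {r})" using R(5) ab(3) by auto
      ultimately show ?thesis using ab(3) by (simp add: inj_on_insert)
    qed
    have c4: "\<forall>k\<in>?R-{r}. ?p k \<in> F \<and> k \<in> ?p k \<and> ?p k \<subseteq> ?R"
      using R(5) abF ab(2) by auto
    have "r \<in> ?R \<and> ?R \<subseteq> S \<and> card ?R = Suc (Suc m) \<and> inj_on ?p (?R - {r}) \<and>
     (\<forall>k\<in>?R-{r}. ?p k \<in> F \<and> k \<in> ?p k \<and> ?p k \<subseteq> ?R)"
      using R(1,2) bS c1 c2 c3 c4 by simp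
    then show ?case by (intro exI[where x="?R"] exI[where x="?p"])
  qed
  have cS: "card S > 0" using fin r by (auto simp: card_gt_0_iff)
  obtain R p where R: "r \<in> R" "R \<subseteq> S" "card R = card S" "inj_on p (R - {r})"
     "\<forall>k\<in>R-{r}. p k \<in> F \<and> k \<in> p k \<and> p k \<subseteq> R"
    using main[of "card S - 1"] cS by auto
  have "R = S" using R(2,3) fin card_subset_eq by blast
  then show ?thesis using R by blast
qed

lemma sum_lb:
  fixes w :: "'a set \<Rightarrow> real"
  fixes lb :: "'a \<Rightarrow> real"
  assumes conn: "connected_graph S F" and fin: "finite S" and sub: "\<forall>e\<in>F. e \<subseteq> S" and r: "r \<in> S"
    and finF: "finite F" and nn: "\<forall>e\<in>F. 0 \<le> w e" and lb: "\<forall>e\<in>F. \<forall>k\<in>e. k \<noteq> r \<longrightarrow> lb k \<le> w e"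
  shows "sum lb (S - {r}) \<le> sum w F"
proof -
  obtain p where p: "inj_on p (S - {r})" "\<forall>k\<in>S-{r}. p k \<in> F \<and> k \<in> p k"
    using tree_inj[OF conn fin sub r] by blast
  have "sum lb (S - {r}) \<le> sum (w \<circ> p) (S - {r})"
    by (rule sum_mono) (use p lb in auto)
  also have "\<dots> = sum w (p ` (S - {r}))" by (simp add: sum.reindex p(1))
  also have "\<dots> \<le> sum w F" by (rule sum_mono2) (use finF p nn in auto)
  finally show ?thesis .
qed



lemma nec_core:
  fixes n :: nat and D :: "nat \<Rightarrow> real" and E :: "nat set set" and w
  assumes n3: "n \<ge> 3" and pos: "pos_weighted_graph {1..n} E w"
    and mc: "\<forall>i\<in>{1..n}. min_conn_weight {1..n} E w ({1..n} - {i}) (D i)"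
  shows "\<exists>M. (\<forall>j\<in>{1..n}. D j \<le> M) \<and> (\<forall>i\<in>{1..n}. \<exists>q. (\<forall>j\<in>{1..n}-{i}. 0 < q j \<and> M \<le> D j + q j)
            \<and> sum q ({1..n}-{i}) \<le> M)"
proof -
  define V where "V = {1..n}"
  have finV: "finite V" by (simp add: V_def)
  have Esub: "\<forall>e\<in>E. e \<subseteq> V \<and> card e = 2" and wpos: "\<forall>e\<in>E. w e > 0"
    using pos by (auto simp: pos_weighted_graph_def simple_graph_def V_def)
  have finE: "finite E" using Esub finV by (meson Pow_iff finite_Pow_iff finite_subset subsetI)
  have ex: "\<exists>S F. subgraph S F V E \<and> connected_graph S F \<and> V - {i} \<subseteq> S \<and> sum w F = D i"
    if "i \<in> V" for i using mc that by (auto simp: min_conn_weight_def V_def)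
  have low: "D i \<le> sum w F" if "i \<in> V" "subgraph S F V E" "connected_graph S F" "V - {i} \<subseteq> S" for i S F
    using mc that by (auto simp: min_conn_weight_def V_def)
  define P where "P = {F. F \<subseteq> E \<and> connected_graph V F}"
  have finP: "finite P" unfolding P_def using finE by auto
  have "1 \<in> V" "2 \<in> V" "3 \<in> V" using n3 by (auto simp: V_def)
  obtain S1 F1 where 1: "subgraph S1 F1 V E" "connected_graph S1 F1" "V - {1} \<subseteq> S1"
    using ex[OF \<open>1 \<in> V\<close>] by blast
  obtain S2 F2 where 2: "subgraph S2 F2 V E" "connected_graph S2 F2" "V - {2} \<subseteq> S2"
    using ex[OF \<open>2 \<in> V\<close>] by blast
  have "connected_graph (S1 \<union> S2) (F1 \<union> F2)"
    by (rule conn_union[OF 1(2) 2(2), of 3]) (use 1(3) 2(3) \<open>3 \<in> V\<close> in auto)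
  moreover have "S1 \<union> S2 = V" using 1(1,3) 2(1,3) by (auto simp: subgraph_def)
  moreover have "F1 \<union> F2 \<subseteq> E" using 1(1) 2(1) by (auto simp: subgraph_def)
  ultimately have "F1 \<union> F2 \<in> P" unfolding P_def by simp
  then have Pne: "P \<noteq> {}" by blast
  define M where "M = Min (sum w ` P)"
  have "M \<in> sum w ` P" unfolding M_def using finP Pne by (intro Min_in) auto
  then obtain F0 where F0: "F0 \<in> P" "sum w F0 = M" by auto
  have Mle: "M \<le> sum w F" if "F \<in> P" for F unfolding M_def using finP that by (intro Min_le) auto
  have sg: "subgraph V F V E" if "F \<in> P" for F
    using that Esub by (auto simp: P_def subgraph_def)
  have F0c: "connected_graph V F0" "F0 \<subseteq> E" using F0(1) by (auto simp: P_def)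
  have DM: "\<forall>j\<in>V. D j \<le> M"
    using low[OF _ sg[OF F0(1)] F0c(1)] F0(2) by auto
  have main: "\<exists>q. (\<forall>j\<in>V-{i}. 0 < q j \<and> M \<le> D j + q j) \<and> sum q (V-{i}) \<le> M" if iV: "i \<in> V" for i
  proof -
    obtain p where p: "inj_on p (V - {i})" "\<forall>k\<in>V-{i}. p k \<in> F0 \<and> k \<in> p k"
      using tree_inj[OF F0c(1) finV _ iV] Esub F0c(2) by blast
    have qpos: "0 < w (p j)" if "j \<in> V - {i}" for j using p(2) that F0c(2) wpos by blast
    have qM: "M \<le> D j + w (p j)" if jV: "j \<in> V - {i}" for j
    proof -
      obtain S F where SF: "subgraph S F V E" "connected_graph S F" "V - {j} \<subseteq> S" "sum w F = D j"
        using ex jV by blast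
      have FE: "F \<subseteq> E" and SV: "S \<subseteq> V" using SF(1) by (auto simp: subgraph_def)
      show ?thesis
      proof (cases "j \<in> S")
        case True
        then have "S = V" using SF(3) SV by blast
        then have "F \<in> P" using SF FE by (auto simp: P_def)
        then show ?thesis using Mle SF(4) qpos[OF jV] by fastforce
      next
        case False
        then have SVj: "S = V - {j}" using SF(3) SV by blast
        have pjE: "p j \<in> E" "j \<in> p j" using p(2) jV F0c(2) by auto
        then have "card (p j) = 2" "p j \<subseteq> V" using Esub by auto
        then obtain y where y: "p j = {j, y}" "y \<noteq> j"
          using pjE(2) by (auto simp: card_2_iff) (metis insert_commute)
        have yV: "y \<in> V" using y \<open>p j \<subseteq> V\<close> by auto
        have ce: "connected_graph {j,y} {{j,y}}"
          using conn_star[of j "{j,y}"] y(2) by (simp add: insert_Diff_if)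
        have "connected_graph (S \<union> {j,y}) (F \<union> {{j,y}})"
          by (rule conn_union[OF SF(2) ce, of y]) (use SVj yV y in auto)
        moreover have "S \<union> {j,y} = V" using SVj jV yV by auto
        moreover have "F \<union> {{j,y}} \<subseteq> E" using FE pjE y by auto
        ultimately have "F \<union> {{j,y}} \<in> P" by (simp add: P_def)
        then have "M \<le> sum w (F \<union> {{j,y}})" by (rule Mle)
        also have "\<dots> \<le> sum w F + w (p j)"
        proof (cases "{j,y} \<in> F")
          case True
          then show ?thesis using qpos[OF jV] by (simp add: insert_absorb)
        next
          case False
          have "finite F" using FE finE finite_subset by blast
          then show ?thesis using False y by simp
        qed
        finally show ?thesis using SF(4) by simp
      qed
    qed
    have "sum (w \<circ> p) (V - {i}) = sum w (p ` (V - {i}))" by (simp add: sum.reindex p(1))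
    also have "\<dots> \<le> sum w F0" by (rule sum_mono2) (use finE F0c(2) finite_subset p wpos in \<open>auto intro: less_imp_le\<close>)
    finally have "sum (w \<circ> p) (V - {i}) \<le> M" using F0(2) by simp
    then show ?thesis using qpos qM by (intro exI[of _ "w \<circ> p"]) auto
  qed
  show ?thesis using DM main unfolding V_def by blast
qed



lemma fwd:
  fixes n :: nat and D :: "nat \<Rightarrow> real"
  assumes n3: "n \<ge> 3"
    and ex: "\<exists>E w. pos_weighted_graph {1..n} E w \<and>
            (\<forall>i\<in>{1..n}. min_conn_weight {1..n} E w ({1..n} - {i}) (D i))"
  shows "(\<forall>i\<in>{1..n}. (real n - 2) * D i \<le> (\<Sum>j\<in>{1..n} - {i}. D j)) \<and>
          (card {i\<in>{1..n}. D i = Max (D ` {1..n})} \<ge> 2 \<longrightarrow>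
             (\<forall>i\<in>{1..n}. (real n - 2) * D i < (\<Sum>j\<in>{1..n} - {i}. D j)))"
proof -
  define V where "V = {1..n}"
  obtain M where DM: "\<forall>j\<in>V. D j \<le> M" and
    Q: "\<forall>i\<in>V. \<exists>q. (\<forall>j\<in>V-{i}. 0 < q j \<and> M \<le> D j + q j) \<and> sum q (V-{i}) \<le> M"
  proof -
    from ex obtain E w where Ew: "pos_weighted_graph {1..n} E w"
      "\<forall>i\<in>{1..n}. min_conn_weight {1..n} E w ({1..n} - {i}) (D i)" by blast
    show ?thesis using nec_core[OF n3 Ew(1) Ew(2)] that unfolding V_def by blast
  qed
  have cardV: "real (card (V - {i})) = real n - 1" if "i \<in> V" for i
    using that n3 by (simp add: V_def of_nat_diff)
  have key: "(real n - 2) * M \<le> sum D (V - {i}) \<and>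
     (\<forall>j\<in>V-{i}. sum D (V - {i}) \<le> (real n - 2) * M \<longrightarrow> D j < M)" if iV: "i \<in> V" for i
  proof -
    obtain q where q: "\<forall>j\<in>V-{i}. 0 < q j \<and> M \<le> D j + q j" "sum q (V-{i}) \<le> M"
      using Q iV by blast
    have fin: "finite (V - {i})" by (simp add: V_def)
    have eqs: "sum (\<lambda>j. D j + q j - M) (V - {i}) = sum D (V-{i}) + sum q (V-{i}) - (real n - 1) * M"
      using cardV[OF iV] by (simp add: sum_subtractf sum.distrib)
    have nn: "\<forall>j\<in>V-{i}. 0 \<le> D j + q j - M" using q(1) by auto
    have "0 \<le> sum (\<lambda>j. D j + q j - M) (V - {i})" by (rule sum_nonneg) (use nn in blast)
    then have s0: "0 \<le> sum D (V-{i}) + sum q (V-{i}) - (real n - 1) * M" using eqs by simp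
    have A: "(real n - 2) * M \<le> sum D (V - {i})" using s0 q(2) by (simp add: algebra_simps)
    have B: "D j < M" if jV: "j \<in> V-{i}" and le: "sum D (V - {i}) \<le> (real n - 2) * M" for j
    proof -
      have "D j + q j - M \<le> sum (\<lambda>j. D j + q j - M) (V - {i})"
        by (rule member_le_sum) (use jV nn fin in auto)
      also have "\<dots> \<le> 0" using eqs le q(2)
        by (simp add: algebra_simps)
      finally show ?thesis using q(1) jV by force
    qed
    show ?thesis using A B by blast
  qed
  have n2: "real n - 2 > 0" using n3 by simp
  have P1: "\<forall>i\<in>V. (real n - 2) * D i \<le> sum D (V - {i})"
  proof
    fix i assume iV: "i \<in> V"
    have "(real n - 2) * D i \<le> (real n - 2) * M" using DM iV n2 by (simp add: mult_left_mono)
    then show "(real n - 2) * D i \<le> sum D (V - {i})" using key[OF iV] by linarith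
  qed
  have P2: "(\<forall>i\<in>V. (real n - 2) * D i < sum D (V - {i}))"
    if c2: "card {i\<in>V. D i = Max (D ` V)} \<ge> 2"
  proof (rule ccontr)
    assume "\<not> (\<forall>i\<in>V. (real n - 2) * D i < sum D (V - {i}))"
    then obtain i where iV: "i \<in> V" and ge: "sum D (V - {i}) \<le> (real n - 2) * D i" by force
    have "(real n - 2) * M \<le> (real n - 2) * D i" using ge key[OF iV] by linarith
    then have "M \<le> D i" using n2 by simp
    then have DiM: "D i = M" using DM iV by force
    have lt: "D j < D i" if "j \<in> V - {i}" for j
      using key[OF iV] ge DiM that by auto
    have finV: "finite V" by (simp add: V_def)
    have "Max (D ` V) = D i"
      by (rule Max_eqI) (use finV iV lt in \<open>auto intro: less_imp_le\<close>)
    then have "{i\<in>V. D i = Max (D ` V)} \<subseteq> {i}" using lt by force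
    then have "card {i\<in>V. D i = Max (D ` V)} \<le> 1"
      using card_mono[of "{i}"] by simp
    then show False using c2 by simp
  qed
  show ?thesis using P1 P2 unfolding V_def by blast
qed



lemma inj_pair: "inj_on (\<lambda>j. {c,j}) A"
  unfolding inj_on_def by (auto simp: doubleton_eq_iff)

lemma bwd:
  fixes n :: nat and D :: "nat \<Rightarrow> real"
  assumes n3: "n \<ge> 3" and Dpos: "\<forall>i\<in>{1..n}. D i > 0"
    and c1: "\<forall>i\<in>{1..n}. (real n - 2) * D i \<le> (\<Sum>j\<in>{1..n} - {i}. D j)"
    and c2: "card {i\<in>{1..n}. D i = Max (D ` {1..n})} \<ge> 2 \<longrightarrow>
             (\<forall>i\<in>{1..n}. (real n - 2) * D i < (\<Sum>j\<in>{1..n} - {i}. D j))"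
  shows "\<exists>E w. pos_weighted_graph {1..n} E w \<and>
            (\<forall>i\<in>{1..n}. min_conn_weight {1..n} E w ({1..n} - {i}) (D i))"
proof -
  define V where "V = {1..n}"
  define N where "N = real n"
  have finV: "finite V" by (simp add: V_def)
  have cardV: "card V = n" by (simp add: V_def)
  have N2: "N - 2 > 0" "N - 1 > 0" using n3 by (auto simp: N_def)
  have Vne: "V \<noteq> {}" using n3 by (auto simp: V_def)
  have "Max (D ` V) \<in> D ` V" using finV Vne by (intro Max_in) auto
  then obtain c where cV: "c \<in> V" and cM: "D c = Max (D ` V)" by auto
  have cmax: "\<forall>j\<in>V. D j \<le> D c" using cM finV by auto
  have cardVc: "card (V - {c}) = n - 1" using cV finV cardV by simp
  have Vcne: "V - {c} \<noteq> {}" proof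
    assume "V - {c} = {}"
    then have "card (V - {c}) = 0" by (simp only: card.empty)
    then show False using cardVc n3 by simp
  qed
  have "Max (D ` (V - {c})) \<in> D ` (V - {c})" using finV Vcne by (intro Max_in) auto
  then obtain d where dM': "Max (D ` (V - {c})) = D d" and dV: "d \<in> V - {c}" by (rule imageE)
  have dM: "D d = Max (D ` (V - {c}))" using dM' by simp
  have dmax: "\<forall>j\<in>V-{c}. D j \<le> D d" using dM finV by auto
  have cardVcd: "card (V - {c} - {d}) = n - 2" using dV finV cardVc by simp
  have rcardVc: "real (card (V - {c})) = N - 1" using cardVc n3 by (simp add: N_def of_nat_diff)
  have rcardVcd: "real (card (V - {c} - {d})) = N - 2" using cardVcd n3 by (simp add: N_def of_nat_diff)
  define Sg where "Sg = sum D V"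
  define S' where "S' = Sg / (N - 1)"
  define t where "t = (S' - D c) / (N - 2)"
  define a where "a j = S' + t - D j" for j
  define s where "s = (D c - D d) / (N - 2)"
  define b where "b j = a j + s" for j
  have sumc: "Sg = D c + sum D (V - {c})" unfolding Sg_def using finV cV by (simp add: sum.remove)
  have NS: "(N - 1) * S' = Sg" unfolding S'_def using N2 by simp
  have "(N - 2) * D c \<le> sum D (V - {c})" using c1 cV by (simp add: V_def N_def)
  then have "(N - 1) * D c \<le> Sg" using sumc by (simp add: algebra_simps)
  then have DcS: "D c \<le> S'" using NS N2 by (metis mult_le_cancel_left_pos)
  have t0: "t \<ge> 0" unfolding t_def using DcS N2 by simp
  have s0: "s \<ge> 0"
  proof -
    have "D d \<le> D c" using cmax dV by blast
    then show ?thesis unfolding s_def using N2 by simp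
  qed
  have St: "S' = D c + (N - 2) * t" unfolding t_def using N2 by simp
  have sumA: "sum a (V - {c}) = S' + t"
  proof -
    have "sum a (V - {c}) = (N - 1) * (S' + t) - sum D (V - {c})"
      unfolding a_def using rcardVc by (simp add: sum_subtractf)
    also have "\<dots> = S' + t"
    proof -
      have e1: "(N - 1) * (S' + t) = Sg + (N - 2) * t + t" using NS by (simp add: algebra_simps)
      show ?thesis using e1 sumc St by linarith
    qed
    finally show ?thesis .
  qed
  have Di: "sum a (V - {c} - {i}) = D i" if "i \<in> V - {c}" for i
  proof -
    have "sum a (V - {c}) = a i + sum a (V - {c} - {i})" using that finV by (simp add: sum.remove)
    then show ?thesis using sumA by (simp add: a_def)
  qed
  have Dcb: "sum b (V - {c} - {d}) = D c"
  proof -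
    have "sum b (V - {c} - {d}) = sum a (V - {c} - {d}) + (N - 2) * s"
      unfolding b_def using rcardVcd by (simp add: sum.distrib)
    also have "\<dots> = D c" using Di[OF dV] N2 by (simp add: s_def)
    finally show ?thesis .
  qed
  have DcA: "D c \<le> S' + t" using DcS t0 by simp
  have apos: "a j > 0" if jV: "j \<in> V - {c}" for j
  proof (cases "D j < D c")
    case True then show ?thesis using DcS t0 by (simp add: a_def)
  next
    case False
    then have eq: "D j = D c" using cmax jV by force
    have "{c, j} \<subseteq> {i\<in>V. D i = Max (D ` V)}" using cM eq cV jV by auto
    then have "card {c, j} \<le> card {i\<in>V. D i = Max (D ` V)}" by (rule card_mono[rotated]) (simp add: finV)
    moreover have "card {c, j} = 2" using jV by auto
    ultimately have "(N - 2) * D c < sum D (V - {c})" using c2 cV by (simp add: V_def N_def)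
    then have "(N - 1) * D c < (N - 1) * S'" using sumc NS by (simp add: algebra_simps)
    then have "D c < S'" using N2 by simp
    then show ?thesis using eq t0 by (simp add: a_def)
  qed
  have ad: "a d \<le> a j" if "j \<in> V - {c}" for j using dmax that by (simp add: a_def)
  have bpos: "b j > 0" if "j \<in> V - {c}" for j using apos[OF that] s0 by (simp add: b_def)
  define E where "E = (\<lambda>j. {c,j}) ` (V - {c}) \<union> (\<lambda>j. {d,j}) ` (V - {c} - {d})"
  define w where "w e = (if c \<in> e then sum a (e - {c}) else sum b (e - {d}))" for e
  have wc: "w {c,j} = a j" if "j \<noteq> c" for j
  proof -
    have "{c,j} - {c} = {j}" using that by auto
    then show ?thesis by (simp add: w_def)
  qed
  have wd: "w {d,j} = b j" if "j \<in> V - {c} - {d}" for j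
  proof -
    have "{d,j} - {d} = {j}" "c \<notin> {d,j}" using that dV by auto
    then show ?thesis by (simp add: w_def)
  qed
  have wpos: "\<forall>e\<in>E. w e > 0"
  proof
    fix e assume "e \<in> E"
    then consider (A) j where "j \<in> V - {c}" "e = {c,j}" | (B) j where "j \<in> V - {c} - {d}" "e = {d,j}"
      unfolding E_def by blast
    then show "w e > 0"
    proof cases
      case A then show ?thesis using wc[of j] apos[of j] by simp
    next
      case B then show ?thesis using wd[of j] bpos[of j] by simp
    qed
  qed
  have simple: "simple_graph V E"
    unfolding simple_graph_def E_def using finV cV dV by auto
  have pwg: "pos_weighted_graph V E w" using simple wpos by (simp add: pos_weighted_graph_def)
  have finE: "finite E" unfolding E_def using finV by simp
  have lbA: "\<forall>e\<in>E. \<forall>k\<in>e. k \<noteq> c \<longrightarrow> a k \<le> w e"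
  proof (intro ballI impI)
    fix e k assume e: "e \<in> E" and k: "k \<in> e" "k \<noteq> c"
    show "a k \<le> w e"
    proof (cases "e \<in> (\<lambda>j. {c,j}) ` (V - {c})")
      case True
      then obtain j where j: "j \<in> V - {c}" "e = {c,j}" by auto
      then show ?thesis using k wc by auto
    next
      case False
      then obtain j where j: "j \<in> V - {c} - {d}" "e = {d,j}" using e by (auto simp: E_def)
      have "a j \<le> b j" using s0 by (simp add: b_def)
      moreover have "a d \<le> a j" using ad j(1) by auto
      ultimately show ?thesis using k j wd[OF j(1)] by auto
    qed
  qed
  have lbB: "\<forall>e\<in>E. c \<notin> e \<longrightarrow> (\<forall>k\<in>e. k \<noteq> d \<longrightarrow> b k \<le> w e)"
  proof (intro ballI impI)
    fix e k assume e: "e \<in> E" and ce: "c \<notin> e" and k: "k \<in> e" "k \<noteq> d"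
    then obtain j where j: "j \<in> V - {c} - {d}" "e = {d,j}" by (auto simp: E_def)
    then show "b k \<le> w e" using k wd[OF j(1)] by auto
  qed
  have mc: "min_conn_weight V E w (V - {i}) (D i)" if iV: "i \<in> V" for i
    unfolding min_conn_weight_def
  proof (intro conjI allI impI)
    show "\<exists>S F. subgraph S F V E \<and> connected_graph S F \<and> V - {i} \<subseteq> S \<and> sum w F = D i"
    proof (cases "i = c")
      case True
      let ?F = "(\<lambda>j. {d,j}) ` (V - {c} - {d})"
      have "subgraph (V - {c}) ?F V E" unfolding subgraph_def E_def using dV by auto
      moreover have "connected_graph (V - {c}) ?F" using conn_star[of d "V - {c}"] dV by simp
      moreover have "sum w ?F = D i"
      proof -
        have "sum w ?F = sum (w \<circ> (\<lambda>j. {d,j})) (V - {c} - {d})" by (simp add: sum.reindex inj_pair)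
        also have "\<dots> = sum b (V - {c} - {d})" by (rule sum.cong) (use wd in auto)
        finally show ?thesis using Dcb True by simp
      qed
      ultimately show ?thesis using True by blast
    next
      case False
      let ?F = "(\<lambda>j. {c,j}) ` (V - {c} - {i})"
      have eqs: "V - {i} - {c} = V - {c} - {i}" by auto
      have "subgraph (V - {i}) ?F V E" unfolding subgraph_def E_def using cV False by auto
      moreover have "connected_graph (V - {i}) ?F" using conn_star[of c "V - {i}"] cV False eqs by simp
      moreover have "sum w ?F = D i"
      proof -
        have "sum w ?F = sum (w \<circ> (\<lambda>j. {c,j})) (V - {c} - {i})" by (simp add: sum.reindex inj_pair)
        also have "\<dots> = sum a (V - {c} - {i})" by (rule sum.cong) (use wc in auto)
        finally show ?thesis using Di False iV by simp
      qed
      ultimately show ?thesis by blast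
    qed
  next
    fix S F assume H: "subgraph S F V E \<and> connected_graph S F \<and> V - {i} \<subseteq> S"
    have SV: "S \<subseteq> V" and FE: "F \<subseteq> E" and sub: "\<forall>e\<in>F. e \<subseteq> S" and conn: "connected_graph S F"
      and Si: "V - {i} \<subseteq> S"
      using H by (auto simp: subgraph_def)
    have finS: "finite S" using SV finV finite_subset by blast
    have finF: "finite F" using FE finE finite_subset by blast
    have nnF: "\<forall>e\<in>F. 0 \<le> w e" using FE wpos by (auto intro: less_imp_le)
    show "D i \<le> sum w F"
    proof (cases "c \<in> S")
      case True
      have L: "sum a (S - {c}) \<le> sum w F"
        by (rule sum_lb[OF conn finS sub True finF nnF]) (use lbA FE in blast)
      show ?thesis
      proof (cases "i = c")
        case True
        then have "S - {c} = V - {c}" using Si SV by auto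
        then show ?thesis using L DcA sumA True by simp
      next
        case False
        have "sum a (V - {c} - {i}) \<le> sum a (S - {c})"
          by (rule sum_mono2) (use finS Si SV apos in \<open>auto intro: less_imp_le\<close>)
        then show ?thesis using L Di[of i] False iV by simp
      qed
    next
      case False
      then have ic: "i = c" using Si cV by blast
      then have Seq: "S = V - {c}" using Si SV False by auto
      have dS: "d \<in> S" using Seq dV by simp
      have L: "sum b (S - {d}) \<le> sum w F"
      proof (rule sum_lb[OF conn finS sub dS finF nnF])
        show "\<forall>e\<in>F. \<forall>k\<in>e. k \<noteq> d \<longrightarrow> b k \<le> w e"
        proof (intro ballI impI)
          fix e k assume "e \<in> F" "k \<in> e" "k \<noteq> d"
          moreover have "c \<notin> e" using \<open>e \<in> F\<close> sub False by blast
          ultimately show "b k \<le> w e" using lbB FE by blast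
        qed
      qed
      then show ?thesis using Seq Dcb ic by simp
    qed
  qed
  show ?thesis using pwg mc unfolding V_def by blast
qed


theorem theorem4p1:
  fixes n :: nat and D :: "nat \<Rightarrow> real"
  assumes "n \<ge> 3"
    and "\<forall>i\<in>{1..n}. D i > 0"
  shows "(\<exists>E w. pos_weighted_graph {1..n} E w \<and>
            (\<forall>i\<in>{1..n}. min_conn_weight {1..n} E w ({1..n} - {i}) (D i)))
         \<longleftrightarrow>
         ((\<forall>i\<in>{1..n}. (real n - 2) * D i \<le> (\<Sum>j\<in>{1..n} - {i}. D j)) \<and>
          (card {i\<in>{1..n}. D i = Max (D ` {1..n})} \<ge> 2 \<longrightarrow>
             (\<forall>i\<in>{1..n}. (real n - 2) * D i < (\<Sum>j\<in>{1..n} - {i}. D j))))"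
proof
  assume h: "\<exists>E w. pos_weighted_graph {1..n} E w \<and>
            (\<forall>i\<in>{1..n}. min_conn_weight {1..n} E w ({1..n} - {i}) (D i))"
  show "(\<forall>i\<in>{1..n}. (real n - 2) * D i \<le> (\<Sum>j\<in>{1..n} - {i}. D j)) \<and>
          (card {i\<in>{1..n}. D i = Max (D ` {1..n})} \<ge> 2 \<longrightarrow>
             (\<forall>i\<in>{1..n}. (real n - 2) * D i < (\<Sum>j\<in>{1..n} - {i}. D j)))"
    by (rule fwd[OF assms(1) h])
next
  assume h: "(\<forall>i\<in>{1..n}. (real n - 2) * D i \<le> (\<Sum>j\<in>{1..n} - {i}. D j)) \<and>
          (card {i\<in>{1..n}. D i = Max (D ` {1..n})} \<ge> 2 \<longrightarrow>
             (\<forall>i\<in>{1..n}. (real n - 2) * D i < (\<Sum>j\<in>{1..n} - {i}. D j)))"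
  show "\<exists>E w. pos_weighted_graph {1..n} E w \<and>
            (\<forall>i\<in>{1..n}. min_conn_weight {1..n} E w ({1..n} - {i}) (D i))"
    by (rule bwd[OF assms(1) assms(2) conjunct1[OF h] conjunct2[OF h]])
qed

end
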